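(* Let $p$ be a prime, $m,e$ positive integers and $b\ge2$ an integer with $b<p^e$. Then $b+1\leq d_b(\mathcal{C}_i)\leq 2b$ for every $1\leq i\leq p^{e-1}$.
   Context: For $0\le i\le p^e$, $\mathcal{C}_i$ denotes the cyclic code $\langle (x-1)^i\rangle\subseteq \mathbb{F}_{p^m}[x]/\langle x^{p^e}-1\rangle$, with polynomials identified with their coefficient vectors in $\mathbb{F}_{p^m}^{p^e}$. For $c\in\mathbb{F}_{p^m}^{n}$, $\pi_b(c)$ is the list of the $n$ cyclically consecutive $b$-tuples $(c_j,\dots,c_{j+b-1})$ (indices mod $n$), $d_b(c,c')=d_H(\pi_b(c),\pi_b(c'))$, and $d_b(\mathcal{C})$ is the minimum of $d_b(c,c')$ over distinct $c,c'\in\mathcal{C}$. *)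

theory Defs
  imports "HOL-Computational_Algebra.Polynomial" "HOL-Library.Cardinality"
begin

text \<open>The cyclic code C_i = ideal generated by (x-1)^i in F[x]/(x^n-1), where the
  residue classes are represented by their reduced representatives (degree < n).\<close>
definition cyclic_code_poly :: "nat \<Rightarrow> nat \<Rightarrow> 'a::field poly set" where
  "cyclic_code_poly n i = {([:-1, 1:] ^ i * g) mod (monom 1 n - 1) | g. True}"

definition coeff_vec :: "nat \<Rightarrow> 'a::zero poly \<Rightarrow> nat \<Rightarrow> 'a" where
  "coeff_vec n c = (\<lambda>j. if j < n then coeff c j else 0)"

definition cyclic_code :: "nat \<Rightarrow> nat \<Rightarrow> (nat \<Rightarrow> 'a::field) set" where
  "cyclic_code n i = coeff_vec n ` cyclic_code_poly n i"

definition pi_b :: "nat \<Rightarrow> nat \<Rightarrow> (nat \<Rightarrow> 'a) \<Rightarrow> nat \<Rightarrow> 'a list" where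
  "pi_b n b c = (\<lambda>j. map (\<lambda>k. c ((j + k) mod n)) [0..<b])"

definition hamming_dist :: "nat \<Rightarrow> (nat \<Rightarrow> 'b) \<Rightarrow> (nat \<Rightarrow> 'b) \<Rightarrow> nat" where
  "hamming_dist n u v = card {j. j < n \<and> u j \<noteq> v j}"

definition d_b :: "nat \<Rightarrow> nat \<Rightarrow> (nat \<Rightarrow> 'a) \<Rightarrow> (nat \<Rightarrow> 'a) \<Rightarrow> nat" where
  "d_b n b c c' = hamming_dist n (pi_b n b c) (pi_b n b c')"

definition min_d_b :: "nat \<Rightarrow> nat \<Rightarrow> (nat \<Rightarrow> 'a) set \<Rightarrow> nat" where
  "min_d_b n b C = Min {d_b n b c c' | c c'. c \<in> C \<and> c' \<in> C \<and> c \<noteq> c'}"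

end

theory Submission
  imports Defs "HOL-Number_Theory.Residues"
begin

hide_const (open) UnivPoly.coeff UnivPoly.monom UnivPoly.deg

lemma M0: assumes "n \<ge> 1" shows "(monom 1 n - 1 :: 'a::field poly) \<noteq> 0"
proof
  assume "(monom 1 n - 1 :: 'a poly) = 0"
  hence "coeff (monom 1 n - 1 :: 'a poly) n = 0" by simp
  thus False using assms by (simp add: coeff_monom)
qed
lemma dM: assumes "n \<ge> 1" shows "degree (monom 1 n - 1 :: 'a::field poly) = n"
proof -
  have "monom 1 n - 1 = monom 1 n + (- 1 :: 'a poly)" by simp
  also have "degree \<dots> = n" using assms by (subst degree_add_eq_left) (auto simp: degree_monom_eq)
  finally show ?thesis .
qed
lemma sum_coeff_zero:
  assumes "r \<in> cyclic_code_poly n i" "i \<ge> 1" "n \<ge> 1"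
  shows "(\<Sum>j<n. coeff (r::'a::field poly) j) = 0"
proof -
  obtain g where r: "r = ([:-1, 1:] ^ i * g) mod (monom 1 n - 1)"
    using assms(1) unfolding cyclic_code_poly_def by auto
  define a where "a = [:-1, 1:] ^ i * g"
  define M where "M = (monom 1 n - 1 :: 'a poly)"
  have M0: "M \<noteq> 0" using M0[OF assms(3)] unfolding M_def .
  have dM: "degree M = n" unfolding M_def using dM[OF assms(3)] .
  have pa: "poly a 1 = 0" unfolding a_def using assms(2) by (simp add: power_0_left)
  have pM: "poly M 1 = 0" unfolding M_def by (simp add: poly_monom)
  have "poly a 1 = poly (a div M) 1 * poly M 1 + poly (a mod M) 1"
    by (metis div_mult_mod_eq poly_add poly_mult)
  hence "poly (a mod M) 1 = 0" using pa pM by simp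
  hence p0: "poly r 1 = 0" using r a_def M_def by simp
  have dr: "degree r < n \<or> r = 0"
    using degree_mod_less[OF M0, of a] dM r a_def M_def by auto
  have "poly r 1 = (\<Sum>j\<le>degree r. coeff r j)" by (simp add: poly_altdef)
  also have "\<dots> = (\<Sum>j<n. coeff r j)"
  proof (cases "r = 0")
    case True thus ?thesis by simp
  next
    case False
    hence "degree r < n" using dr by auto
    thus ?thesis
      by (intro sum.mono_neutral_left) (auto simp: coeff_eq_0)
  qed
  finally show ?thesis using p0 by simp
qed


definition off :: "nat \<Rightarrow> nat \<Rightarrow> nat \<Rightarrow> nat" where
  "off n t k = (if k \<le> t then t - k else t + n - k)"

lemma mod2: "(x::nat) < 2*n \<Longrightarrow> x mod n = (if x < n then x else x - n)"
proof (cases "x < n")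
  case False
  assume a: "x < 2*n"
  have "x = (x - n) + n" using False by simp
  hence "x mod n = ((x - n) + n) mod n" by simp
  also have "\<dots> = (x - n) mod n" by (rule mod_add_self2)
  finally have "x mod n = (x - n) mod n" .
  also have "\<dots> = x - n" using a by simp
  finally show ?thesis using False by simp
qed simp

lemma off_lt: "t < n \<Longrightarrow> k < n \<Longrightarrow> off n t k < n"
  unfolding off_def by auto

lemma off_mod: "t < n \<Longrightarrow> k < n \<Longrightarrow> (off n t k + k) mod n = t"
  unfolding off_def by (subst mod2) auto

lemma off_inj: "t < n \<Longrightarrow> b < n \<Longrightarrow> inj_on (off n t) {..b}"
  unfolding off_def inj_on_def by (auto split: if_splits)

lemma off_extra: "t < n \<Longrightarrow> k0 \<le> b \<Longrightarrow> b < n \<Longrightarrow> (off n t b + (b - k0)) mod n = off n t k0"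
  unfolding off_def by (subst mod2) auto

lemma off_inv: "t < n \<Longrightarrow> j < n \<Longrightarrow> k < n \<Longrightarrow> (j + k) mod n = t \<Longrightarrow> j = off n t k"
  unfolding off_def by (subst (asm) mod2) (auto split: if_splits)

lemma window_diff: "(pi_b n b c j \<noteq> pi_b n b c' j) \<longleftrightarrow> (\<exists>k<b. c ((j+k) mod n) \<noteq> c' ((j+k) mod n))"
  unfolding pi_b_def by (auto simp: map_eq_conv)

lemma d_b_le: "d_b n b c c' \<le> n"
  unfolding d_b_def hamming_dist_def
  by (rule order.trans[OF card_mono[of "{..<n}"]]) auto

lemma lower:
  assumes "1 \<le> b" "b < n" "t1 < n" "t2 < n" "t1 \<noteq> t2" "c t1 \<noteq> c' t1" "c t2 \<noteq> c' t2"
  shows "b + 1 \<le> d_b n b c c'"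
proof -
  define T where "T = {j. j < n \<and> pi_b n b c j \<noteq> pi_b n b c' j}"
  have dT: "d_b n b c c' = card T" unfolding T_def d_b_def hamming_dist_def by simp
  have fT: "finite T" unfolding T_def by auto
  define A where "A = off n t2 ` {..<b}"
  have AT: "A \<subseteq> T"
  proof
    fix j assume "j \<in> A"
    then obtain k where k: "k < b" "j = off n t2 k" unfolding A_def by auto
    have "j < n" using k off_lt assms by auto
    moreover have "(j + k) mod n = t2" using k off_mod assms by auto
    ultimately show "j \<in> T" unfolding T_def window_diff using k assms by auto
  qed
  have cA: "card A = b" unfolding A_def
    by (subst card_image) (auto intro: inj_on_subset[OF off_inj[OF assms(4,2)]])
  obtain e where e: "e \<notin> A" "e \<in> T"
  proof (cases "t1 \<in> A")
    case False
    moreover have "t1 \<in> T" unfolding T_def window_diff using assms by (auto intro!: exI[of _ 0])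
    ultimately show ?thesis using that by blast
  next
    case True
    then obtain k0 where k0: "k0 < b" "t1 = off n t2 k0" unfolding A_def by auto
    have "off n t2 b \<notin> A"
    proof
      assume "off n t2 b \<in> A"
      then obtain k where "k < b" "off n t2 b = off n t2 k" unfolding A_def by auto
      thus False using off_inj[OF assms(4,2)] unfolding inj_on_def by fastforce
    qed
    moreover have "off n t2 b \<in> T"
    proof -
      have "k0 \<noteq> 0" using k0 assms(5) unfolding off_def by (auto split: if_splits)
      hence "b - k0 < b" using k0 by auto
      moreover have "(off n t2 b + (b - k0)) mod n = t1" using off_extra[of t2 n k0 b] k0 assms by auto
      moreover have "off n t2 b < n" using off_lt assms by auto
      ultimately show ?thesis unfolding T_def window_diff using assms by auto
    qed
    ultimately show ?thesis using that by blast
  qed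
  have "card (insert e A) = b + 1" using e cA A_def by (simp add: card_insert_if)
  moreover have "card (insert e A) \<le> card T" using e AT fT by (intro card_mono) auto
  ultimately show ?thesis using dT by simp
qed

lemma upper:
  assumes "b < n" "t1 < n" "t2 < n" "\<And>x. x < n \<Longrightarrow> c x \<noteq> c' x \<Longrightarrow> x = t1 \<or> x = t2"
  shows "d_b n b c c' \<le> 2 * b"
proof -
  define T where "T = {j. j < n \<and> pi_b n b c j \<noteq> pi_b n b c' j}"
  have dT: "d_b n b c c' = card T" unfolding T_def d_b_def hamming_dist_def by simp
  have "T \<subseteq> (\<lambda>(t,k). off n t k) ` ({t1,t2} \<times> {..<b})"
  proof
    fix j assume "j \<in> T"
    then obtain k where k: "j < n" "k < b" "c ((j+k) mod n) \<noteq> c' ((j+k) mod n)"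
      unfolding T_def window_diff by auto
    have "(j+k) mod n < n" using assms by auto
    hence t: "(j+k) mod n \<in> {t1,t2}" using assms(4) k by blast
    have "j = off n ((j+k) mod n) k" using off_inv[of "(j+k) mod n" n j k] k assms by auto
    thus "j \<in> (\<lambda>(t,k). off n t k) ` ({t1,t2} \<times> {..<b})" using t k by force
  qed
  hence "card T \<le> card ((\<lambda>(t,k). off n t k) ` ({t1,t2} \<times> {..<b}))" by (intro card_mono) auto
  also have "\<dots> \<le> card ({t1,t2} \<times> {..<b})" by (rule card_image_le) auto
  also have "\<dots> \<le> 2 * b" by (simp add: card_cartesian_product card_insert_if)
  finally show ?thesis using dT by simp
qed

lemma char_eq:
  assumes "prime p" "m > 0" "CARD('a::{finite,field}) = p ^ m"
  shows "CHAR('a) = p"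
proof -
  have pos: "CHAR('a) > 0" by (rule finite_imp_CHAR_pos) simp
  have pr: "prime CHAR('a)" using prime_CHAR_semidom[OF pos] .
  have "CHAR('a) dvd p ^ m" using CHAR_dvd_CARD[where 'a='a] assms(3) by simp
  hence "CHAR('a) dvd p" using pr prime_dvd_power by blast
  thus ?thesis using pr assms(1) primes_dvd_imp_eq by blast
qed

lemma frob_poly:
  assumes "CHAR('a::field) = p" "prime p"
  shows "([:-1,1:] :: 'a poly) ^ (p ^ k) = monom 1 (p ^ k) - 1"
proof -
  have c: "CHAR('a poly) = p" using assms by simp
  have "([:-1,1:] + 1 :: 'a poly) ^ (p^k) = [:-1,1:] ^ (p^k) + 1 ^ (p^k)"
    by (rule freshmans_dream') (use c assms in auto)
  moreover have "([:-1,1:] + 1 :: 'a poly) = monom 1 1"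
    by (simp add: monom_Suc one_pCons)
  ultimately have "monom 1 (p^k) = [:-1,1:] ^ (p^k) + (1::'a poly)"
    by (simp add: monom_power)
  thus ?thesis by (simp add: algebra_simps)
qed


theorem proposition2p6:
  fixes p m e b i :: nat
    and C :: "(nat \<Rightarrow> 'a::{finite,field}) set"
  assumes "prime p" and "m > 0" and "e > 0"
    and "CARD('a) = p ^ m"
    and "C = cyclic_code (p ^ e) i"
    and "2 \<le> b" and "b < p ^ e"
    and "1 \<le> i" and "i \<le> p ^ (e - 1)"
  shows "b + 1 \<le> min_d_b (p ^ e) b C
       \<and> min_d_b (p ^ e) b C \<le> 2 * b"
proof -
  define n where "n = p ^ e"
  define q where "q = p ^ (e - 1)"
  have p2: "p \<ge> 2" using assms(1) prime_ge_2_nat by blast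
  have nq: "n = p * q" unfolding n_def q_def using assms(3)
    by (metis Suc_diff_1 power_Suc)
  have q1: "q \<ge> 1" unfolding q_def using p2 by simp
  have qn: "q < n" using nq p2 q1 by simp
  have n1: "n \<ge> 1" using qn by simp
  have CH: "CHAR('a) = p" using char_eq assms(1,2,4) by blast
  define M where "M = (monom 1 n - 1 :: 'a poly)"
  define D where "D = {d_b n b c c' | c c'. c \<in> C \<and> c' \<in> C \<and> c \<noteq> c'}"
  have CC: "C = coeff_vec n ` cyclic_code_poly n i" using assms(5) unfolding n_def cyclic_code_def by simp
  have fD: "finite D"
    by (rule finite_subset[of _ "{..n}"]) (auto simp: D_def d_b_le)
  define w where "w = coeff_vec n (monom 1 q - 1 :: 'a poly)"
  define z where "z = coeff_vec n (0 :: 'a poly)"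
  have zC: "z \<in> C" unfolding CC z_def cyclic_code_poly_def
    by (rule imageI) (auto intro!: exI[of _ 0])
  have wC: "w \<in> C"
  proof -
    have "[:-1, 1:] ^ i * [:-1, 1:] ^ (q - i) = ([:-1, 1:] ^ q :: 'a poly)"
      using assms(9) unfolding q_def by (simp flip: power_add)
    also have "\<dots> = monom 1 q - 1" unfolding q_def by (rule frob_poly[OF CH assms(1)])
    finally have e1: "[:-1, 1:] ^ i * [:-1, 1:] ^ (q - i) = (monom 1 q - 1 :: 'a poly)" .
    have "(monom 1 q - 1 :: 'a poly) mod M = monom 1 q - 1"
    proof (rule mod_poly_less)
      have "degree (monom 1 q - 1 :: 'a poly) = q" by (rule dM) (use q1 in simp)
      moreover have "degree M = n" unfolding M_def by (rule dM) (use n1 in simp)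
      ultimately show "degree (monom 1 q - 1 :: 'a poly) < degree M" using qn by simp
    qed
    hence "monom 1 q - 1 = ([:-1, 1:] ^ i * [:-1, 1:] ^ (q - i)) mod (monom 1 n - 1 :: 'a poly)"
      unfolding e1 M_def by (rule sym)
    hence "(monom 1 q - 1 :: 'a poly) \<in> cyclic_code_poly n i"
      unfolding cyclic_code_poly_def
      by (intro CollectI exI[of _ "[:-1, 1:] ^ (q - i)"]) simp
    thus ?thesis unfolding CC w_def by blast
  qed
  have wz: "w \<noteq> z"
  proof
    assume "w = z"
    hence "w q = z q" by simp
    thus False using qn q1 unfolding w_def z_def coeff_vec_def by (simp add: coeff_monom)
  qed
  have "d_b n b w z \<le> 2 * b"
  proof (rule upper[of b n 0 q])
    show "b < n" using assms(7) n_def by simp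
    show "0 < n" using n1 by simp
    show "q < n" by fact
    fix x assume "x < n" "w x \<noteq> z x"
    thus "x = 0 \<or> x = q" unfolding w_def z_def coeff_vec_def
      by (auto simp: coeff_monom split: if_splits)
  qed
  moreover have "d_b n b w z \<in> D" unfolding D_def using wC zC wz by blast
  ultimately have up: "Min D \<le> 2 * b" using fD by (meson Min_le order.trans)
  have lo: "b + 1 \<le> Min D"
  proof (subst Min_ge_iff[OF fD])
    show "D \<noteq> {}" using \<open>d_b n b w z \<in> D\<close> by blast
    show "\<forall>a\<in>D. b + 1 \<le> a"
    proof
      fix a assume "a \<in> D"
      then obtain c c' where cc: "a = d_b n b c c'" "c \<in> C" "c' \<in> C" "c \<noteq> c'"
        unfolding D_def by blast
      obtain r r' where r: "r \<in> cyclic_code_poly n i" "c = coeff_vec n r"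
        "r' \<in> cyclic_code_poly n i" "c' = coeff_vec n r'" using cc CC by blast
      obtain t1 where t1: "t1 < n" "coeff r t1 \<noteq> coeff r' t1"
      proof (rule ccontr)
        assume "\<not> ?thesis"
        hence "\<forall>t<n. coeff r t = coeff r' t" using that by blast
        hence "c = c'" using r unfolding coeff_vec_def by auto
        thus False using cc by simp
      qed
      obtain t2 where t2: "t2 < n" "t2 \<noteq> t1" "coeff r t2 \<noteq> coeff r' t2"
      proof (rule ccontr)
        assume "\<not> ?thesis"
        hence h: "\<forall>t<n. t \<noteq> t1 \<longrightarrow> coeff r t = coeff r' t" using that by blast
        have "(\<Sum>j<n. coeff r j - coeff r' j) = (\<Sum>j<n. coeff r j) - (\<Sum>j<n. coeff r' j)"
          by (simp add: sum_subtractf)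
        also have "\<dots> = 0" using sum_coeff_zero[OF r(1) assms(8) n1] sum_coeff_zero[OF r(3) assms(8) n1] by simp
        finally have s0: "(\<Sum>j<n. coeff r j - coeff r' j) = 0" .
        have "(\<Sum>j<n. coeff r j - coeff r' j) = (\<Sum>j<n. if j = t1 then coeff r t1 - coeff r' t1 else 0)"
          by (rule sum.cong) (use h in auto)
        also have "\<dots> = coeff r t1 - coeff r' t1" using t1 by simp
        finally show False using s0 t1 by simp
      qed
      have "b + 1 \<le> d_b n b c c'"
        by (rule lower[of b n t1 t2]) (use assms(6,7) t1 t2 r in \<open>auto simp: n_def coeff_vec_def\<close>)
      thus "b + 1 \<le> a" using cc by simp
    qed
  qed
  show ?thesis using up lo unfolding min_d_b_def D_def n_def by simp
qed

end
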